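(* Let $(\mathcal{X},\mathcal{Y},\mathcal{I})$ be a $(v,b,r,\lambda)$-RPBD. Suppose there exists an integer $k$ such that $$[b:r:\lambda]=\left[\frac{v}{k}\frac{v-1}{k-1}:\frac{v-1}{k-1}:1\right].$$ Then $|\mathcal{I}^y|=k$ for every $y\in\mathcal{Y}$, and hence $(\mathcal{X},\mathcal{Y},\mathcal{I})$ is a $(v,b,r,k,\lambda)$-block design.
   Context: For an incidence structure $(\mathcal{X},\mathcal{Y},\mathcal{I})$ with $\mathcal{I}\subset\mathcal{X}\times\mathcal{Y}$, $\mathcal{I}_x=\{y:(x,y)\in\mathcal{I}\}$ and $\mathcal{I}^y=\{x:(x,y)\in\mathcal{I}\}$. For integers $v>0$, $b>r>\lambda\ge0$, a $(v,b,r,\lambda)$-RPBD is an incidence structure with $\mathcal{X},\mathcal{Y}$ nonempty finite, $|\mathcal{X}|=v$, $|\mathcal{Y}|=b$, $|\mathcal{I}_x|=r$ for all $x$, $|\mathcal{I}_x\cap\mathcal{I}_{x'}|=\lambda$ for all $x\neq x'$. A $(v,b,r,k,\lambda)$-block design is such an incidence structure that in addition satisfies $|\mathcal{I}^y|=k$ for all $y$ (with $v>k>0$). The ratio equality $[a_1:a_2:a_3]=[c_1:c_2:c_3]$ means $(a_1,a_2,a_3)=t(c_1,c_2,c_3)$ for some $t>0$. *)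

theory Defs
  imports Complex_Main
begin

definition row :: "('a \<times> 'b) set \<Rightarrow> 'a \<Rightarrow> 'b set" where
  "row I x = {y. (x, y) \<in> I}"

definition col :: "('a \<times> 'b) set \<Rightarrow> 'b \<Rightarrow> 'a set" where
  "col I y = {x. (x, y) \<in> I}"

definition RPBD :: "'a set \<Rightarrow> 'b set \<Rightarrow> ('a \<times> 'b) set \<Rightarrow> nat \<Rightarrow> nat \<Rightarrow> nat \<Rightarrow> nat \<Rightarrow> bool" where
  "RPBD X Y I v b r lam \<longleftrightarrow>
     I \<subseteq> X \<times> Y \<and> finite X \<and> finite Y \<and> X \<noteq> {} \<and> Y \<noteq> {} \<and>
     v > 0 \<and> b > r \<and> r > lam \<and> card X = v \<and> card Y = b \<and>
     (\<forall>x\<in>X. card (row I x) = r) \<and>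
     (\<forall>x\<in>X. \<forall>x'\<in>X. x \<noteq> x' \<longrightarrow> card (row I x \<inter> row I x') = lam)"

definition block_design :: "'a set \<Rightarrow> 'b set \<Rightarrow> ('a \<times> 'b) set \<Rightarrow> nat \<Rightarrow> nat \<Rightarrow> nat \<Rightarrow> nat \<Rightarrow> nat \<Rightarrow> bool" where
  "block_design X Y I v b r k lam \<longleftrightarrow>
     RPBD X Y I v b r lam \<and> v > k \<and> k > 0 \<and> (\<forall>y\<in>Y. card (col I y) = k)"

definition ratio_eq3 :: "real \<Rightarrow> real \<Rightarrow> real \<Rightarrow> real \<Rightarrow> real \<Rightarrow> real \<Rightarrow> bool" where
  "ratio_eq3 a1 a2 a3 c1 c2 c3 \<longleftrightarrow> (\<exists>t>0. a1 = t * c1 \<and> a2 = t * c2 \<and> a3 = t * c3)"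

end

theory Submission
  imports Defs
begin

theorem proposition3:
  fixes X :: "'a set" and Y :: "'b set" and I :: "('a \<times> 'b) set"
    and v b r lam :: nat and k :: int
  assumes "RPBD X Y I v b r lam"
    and "ratio_eq3 (real b) (real r) (real lam)
           ((real v / real_of_int k) * ((real v - 1) / (real_of_int k - 1)))
           ((real v - 1) / (real_of_int k - 1)) 1"
  shows "(\<forall>y\<in>Y. int (card (col I y)) = k) \<and> block_design X Y I v b r (nat k) lam"
proof -
  note R = assms(1)[unfolded RPBD_def]
  have IXY: "I \<subseteq> X \<times> Y" and fX: "finite X" and fY: "finite Y" and v0: "v > 0"
    and br: "b > r" and rl: "r > lam" and cX: "card X = v" and cY: "card Y = b"
    and rows: "\<forall>x\<in>X. card (row I x) = r"
    and pairs: "\<forall>x\<in>X. \<forall>x'\<in>X. x \<noteq> x' \<longrightarrow> card (row I x \<inter> row I x') = lam"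
    using R by auto
  obtain t where t0: "t > 0" and hb: "real b = t * ((real v / real_of_int k) * ((real v - 1) / (real_of_int k - 1)))"
    and hr: "real r = t * ((real v - 1) / (real_of_int k - 1))" and hl: "real lam = t"
    using assms(2) unfolding ratio_eq3_def by auto
  have k1: "real_of_int k \<noteq> 1" using hr rl by auto
  have k0: "real_of_int k \<noteq> 0" using hb br by auto
  have e1: "real r * (real_of_int k - 1) = real lam * (real v - 1)"
    using hr hl k1 by (simp add: field_simps)
  have e2: "real b * real_of_int k = real v * real r"
  proof -
    have "real b * real_of_int k = real v * (t * ((real v - 1) / (real_of_int k - 1)))"
    proof -
      have g: "\<And>A. (t * ((real v / real_of_int k) * A)) * real_of_int k = real v * (t * A)"
        using k0 by (simp add: field_simps)
      show ?thesis using g[of "(real v - 1) / (real_of_int k - 1)"] hb by (simp only:)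
    qed
    thus ?thesis using hr by simp
  qed
  have kgt: "real_of_int k > 1"
  proof (rule ccontr)
    assume "\<not> ?thesis"
    hence "real_of_int k - 1 < 0" using k1 by auto
    moreover have "real r > 0" using rl by auto
    ultimately have "real r * (real_of_int k - 1) < 0" by (simp add: mult_pos_neg)
    moreover have "real lam * (real v - 1) \<ge> 0" using v0 by auto
    ultimately show False using e1 by linarith
  qed
  have vgt: "real v - 1 > 0"
  proof -
    have "real r * (real_of_int k - 1) > 0" using kgt rl by auto
    thus ?thesis using e1 hl t0 by (simp add: zero_less_mult_iff)
  qed
  have kv: "real_of_int k < real v"
  proof -
    have "real lam * (real v - 1) < real r * (real v - 1)" using vgt rl by simp
    hence "real r * (real_of_int k - 1) < real r * (real v - 1)" using e1 by simp
    moreover have "real r > 0" using rl by simp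
    ultimately have "real_of_int k - 1 < real v - 1" using mult_less_cancel_left_pos by blast
    thus ?thesis by simp
  qed
  define f where "f x y = (if (x, y) \<in> I then 1 else 0 :: real)" for x y
  have colc: "real (card (col I y)) = (\<Sum>x\<in>X. f x y)" if "y \<in> Y" for y
  proof -
    have "col I y = {x\<in>X. (x, y) \<in> I}" using IXY unfolding col_def by auto
    hence "real (card (col I y)) = (\<Sum>x\<in>{x\<in>X. (x, y) \<in> I}. 1)" by simp
    also have "\<dots> = (\<Sum>x\<in>X. f x y)" by (simp only: f_def sum.inter_filter[OF fX])
    finally show ?thesis .
  qed
  have rowc: "real (card (row I x \<inter> row I x')) = (\<Sum>y\<in>Y. f x y * f x' y)" for x x'
  proof -
    have "row I x \<inter> row I x' = {y\<in>Y. (x, y) \<in> I \<and> (x', y) \<in> I}" using IXY unfolding row_def by auto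
    hence "real (card (row I x \<inter> row I x')) = (\<Sum>y\<in>{y\<in>Y. (x, y) \<in> I \<and> (x', y) \<in> I}. 1)" by simp
    also have "\<dots> = (\<Sum>y\<in>Y. f x y * f x' y)" by (simp only: f_def sum.inter_filter[OF fY]) (rule sum.cong, auto)
    finally show ?thesis .
  qed
  have S1: "(\<Sum>y\<in>Y. real (card (col I y))) = real v * real r"
  proof -
    have "(\<Sum>y\<in>Y. real (card (col I y))) = (\<Sum>y\<in>Y. \<Sum>x\<in>X. f x y)" using colc by simp
    also have "\<dots> = (\<Sum>x\<in>X. \<Sum>y\<in>Y. f x y)" by (rule sum.swap)
    also have "\<dots> = (\<Sum>x\<in>X. real (card (row I x \<inter> row I x)))"
      proof -
        have ff: "f x y * f x y = f x y" for x y by (simp add: f_def)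
        show ?thesis by (simp only: rowc ff)
      qed
    also have "\<dots> = (\<Sum>x\<in>X. real r)" using rows by simp
    finally show ?thesis using cX by simp
  qed
  have S2: "(\<Sum>y\<in>Y. real (card (col I y))^2) = real v * real r * real_of_int k"
  proof -
    have "(\<Sum>y\<in>Y. real (card (col I y))^2) = (\<Sum>y\<in>Y. \<Sum>x\<in>X. \<Sum>x'\<in>X. f x y * f x' y)"
      using colc by (simp add: power2_eq_square sum_product)
    also have "\<dots> = (\<Sum>x\<in>X. \<Sum>y\<in>Y. \<Sum>x'\<in>X. f x y * f x' y)" by (rule sum.swap)
    also have "\<dots> = (\<Sum>x\<in>X. \<Sum>x'\<in>X. \<Sum>y\<in>Y. f x y * f x' y)" 
      by (rule sum.cong[OF refl], rule sum.swap)
    also have "\<dots> = (\<Sum>x\<in>X. \<Sum>x'\<in>X. real (card (row I x \<inter> row I x')))" using rowc by simp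
    also have "\<dots> = (\<Sum>x\<in>X. real r + (real v - 1) * real lam)"
    proof (rule sum.cong[OF refl])
      fix x assume xX: "x \<in> X"
      have "(\<Sum>x'\<in>X. real (card (row I x \<inter> row I x'))) =
            real (card (row I x \<inter> row I x)) + (\<Sum>x'\<in>X - {x}. real (card (row I x \<inter> row I x')))"
        using fX xX by (simp add: sum.remove)
      also have "\<dots> = real r + (\<Sum>x'\<in>X - {x}. real lam)"
      proof -
        have "(\<Sum>x'\<in>X - {x}. real (card (row I x \<inter> row I x'))) = (\<Sum>x'\<in>X - {x}. real lam)"
          by (rule sum.cong) (use pairs xX in auto)
        thus ?thesis using xX rows by simp
      qed
      also have "\<dots> = real r + (real v - 1) * real lam"
        using fX xX cX v0 by (simp add: card_Diff_singleton of_nat_diff Suc_leI)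
      finally show "(\<Sum>x'\<in>X. real (card (row I x \<inter> row I x'))) = real r + (real v - 1) * real lam" .
    qed
    also have "\<dots> = real v * (real r + (real v - 1) * real lam)" using cX by simp
    also have "\<dots> = real v * real r * real_of_int k" 
    proof -
      have "(real v - 1) * real lam = real r * (real_of_int k - 1)" using e1 by (simp add: mult.commute)
      thus ?thesis by (simp add: algebra_simps)
    qed
    finally show ?thesis .
  qed
  have Z: "(\<Sum>y\<in>Y. (real (card (col I y)) - real_of_int k)^2) = 0"
  proof -
    have "(\<Sum>y\<in>Y. (real (card (col I y)) - real_of_int k)^2) =
      (\<Sum>y\<in>Y. real (card (col I y))^2) - 2 * real_of_int k * (\<Sum>y\<in>Y. real (card (col I y)))
      + real b * (real_of_int k)^2"
      using cY by (simp add: power2_diff sum.distrib sum_subtractf sum_distrib_left algebra_simps)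
    also have "\<dots> = 0" using S1 S2 e2 by (simp add: power2_eq_square algebra_simps)
    finally show ?thesis .
  qed
  have allk: "\<forall>y\<in>Y. int (card (col I y)) = k"
  proof
    fix y assume "y \<in> Y"
    hence "(real (card (col I y)) - real_of_int k)^2 = 0"
      using Z fY sum_nonneg_eq_0_iff[of Y "\<lambda>y. (real (card (col I y)) - real_of_int k)^2"] by auto
    hence "real (card (col I y)) = real_of_int k" by simp
    thus "int (card (col I y)) = k" by linarith
  qed
  have kpos: "k > 0" using kgt by simp
  have "v > nat k" using kv kpos by linarith
  moreover have "\<forall>y\<in>Y. card (col I y) = nat k" using allk by auto
  ultimately show ?thesis using allk assms(1) kpos unfolding block_design_def by auto
qed

end
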